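(* For every integer $n\ge1$ and every $u\in V$, $\Pr(E_{3u})<\dfrac{36\,\zeta(3)}{\ln^{2}(n+1)}$, where $\zeta(3)=\sum_{i\ge1} i^{-3}$.
   Context: For an integer $n\ge1$, the $n$-octahedral graph $G'_n=(V,E')$ is the undirected graph with vertex set $V=\{u\in\mathbb{Z}^3:|u_1|+|u_2|+|u_3|=n\}$ and edge set $E'=\{\{v,w\}\subset V: v\neq w,\ |v_i-w_i|\le 1 \text{ for all } i=1,2,3\}$. For $u,v\in V$, $d_{uv}$ denotes the shortest-path distance in $G'_n$, and $Z_u=\left(\sum_{w\in V\setminus\{u\}} d_{uw}^{-2}\right)^{-1}$. The OSW random graph $G_n=(V,E)$ is the directed graph in which, for every $\{u,v\}\in E'$, both $(u,v),(v,u)\in E$, and in addition each vertex $u\in V$, independently of the others, chooses one vertex $v\in V\setminus\{u\}$ with probability $Z_u d_{uv}^{-2}$ and the long-range edge $(u,v)$ is added; $C_{uv}$ denotes the event that $u$ chooses $v$. For an ordered pair $(x,y)$ of distinct vertices, say $(x,y)$ is of type $s$ if $\{x,y\}\in E'$, and of type $w$ if $d_{xy}\ge2$ and $C_{xy}$ occurs. A C3 rooted at $u$ of type $(t_1,t_2,t_3)\in\{s,w\}^3$ is a triple $(u,a,b)$ of pairwise distinct vertices such that $(u,a)$ is of type $t_1$, $(a,b)$ is of type $t_2$ and $(b,u)$ is of type $t_3$. $E_{3u}$ is the event that there exists a C3 rooted at $u$ of type $(s,w,w)$. *)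

theory Defs
  imports "HOL-Probability.Probability"
begin

type_synonym vtx = "int \<times> int \<times> int"

definition octV :: "nat \<Rightarrow> vtx set" where
  "octV n = {(x,y,z). \<bar>x\<bar> + \<bar>y\<bar> + \<bar>z\<bar> = int n}"

definition octAdj :: "nat \<Rightarrow> vtx \<Rightarrow> vtx \<Rightarrow> bool" where
  "octAdj n v w \<longleftrightarrow> v \<in> octV n \<and> w \<in> octV n \<and> v \<noteq> w \<and>
     \<bar>fst v - fst w\<bar> \<le> 1 \<and> \<bar>fst (snd v) - fst (snd w)\<bar> \<le> 1 \<and>
     \<bar>snd (snd v) - snd (snd w)\<bar> \<le> 1"

definition octRel :: "nat \<Rightarrow> vtx rel" where
  "octRel n = {(v,w). octAdj n v w}"

definition octDist :: "nat \<Rightarrow> vtx \<Rightarrow> vtx \<Rightarrow> nat" where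
  "octDist n v w = (LEAST k. (v,w) \<in> (octRel n) ^^ k)"

definition octZ :: "nat \<Rightarrow> vtx \<Rightarrow> real" where
  "octZ n u = inverse (\<Sum>w\<in>octV n - {u}. inverse ((real (octDist n u w))\<^sup>2))"

definition choice_pmf :: "nat \<Rightarrow> vtx \<Rightarrow> vtx pmf" where
  "choice_pmf n u = embed_pmf (\<lambda>v. if v \<in> octV n - {u}
      then octZ n u * inverse ((real (octDist n u v))\<^sup>2) else 0)"

text \<open>Joint independent choices of all vertices: c u is the vertex chosen by u
  (so C_{uv} is the event c u = v).\<close>
definition osw_pmf :: "nat \<Rightarrow> (vtx \<Rightarrow> vtx) pmf" where
  "osw_pmf n = Pi_pmf (octV n) (0,0,0) (choice_pmf n)"

text \<open>Pair types: s = short-range edge of E'; w = long-range edge with d \<ge> 2 chosen.\<close>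
definition type_s :: "nat \<Rightarrow> vtx \<Rightarrow> vtx \<Rightarrow> bool" where
  "type_s n x y \<longleftrightarrow> octAdj n x y"

definition type_w :: "nat \<Rightarrow> (vtx \<Rightarrow> vtx) \<Rightarrow> vtx \<Rightarrow> vtx \<Rightarrow> bool" where
  "type_w n c x y \<longleftrightarrow> x \<noteq> y \<and> octDist n x y \<ge> 2 \<and> c x = y"

definition E3 :: "nat \<Rightarrow> vtx \<Rightarrow> (vtx \<Rightarrow> vtx) set" where
  "E3 n u = {c. \<exists>a b. a \<in> octV n \<and> b \<in> octV n \<and> u \<noteq> a \<and> u \<noteq> b \<and> a \<noteq> b \<and>
       type_s n u a \<and> type_w n c a b \<and> type_w n c b u}"

definition zeta3 :: real where
  "zeta3 = (\<Sum>i. 1 / (real (Suc i))^3)"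

end

theory Submission imports Defs "HOL-Analysis.Harmonic_Numbers"
begin

lemma octV_iff: "(x,y,z) \<in> octV n \<longleftrightarrow> \<bar>x\<bar> + \<bar>y\<bar> + \<bar>z\<bar> = int n"
  by (simp add: octV_def)

lemma octAdj_iff: "octAdj n (a1,a2,a3) (b1,b2,b3) \<longleftrightarrow>
   \<bar>a1\<bar> + \<bar>a2\<bar> + \<bar>a3\<bar> = int n \<and> \<bar>b1\<bar> + \<bar>b2\<bar> + \<bar>b3\<bar> = int n \<and> (a1,a2,a3) \<noteq> (b1,b2,b3) \<and>
   \<bar>a1 - b1\<bar> \<le> 1 \<and> \<bar>a2 - b2\<bar> \<le> 1 \<and> \<bar>a3 - b3\<bar> \<le> 1"
  by (simp add: octAdj_def octV_def)

definition Wp :: "nat \<Rightarrow> int \<Rightarrow> int \<Rightarrow> int \<Rightarrow> int \<Rightarrow> int \<Rightarrow> vtx" where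
  "Wp n s x y p q = (x+p, y+q, s * (int n - \<bar>x+p\<bar> - \<bar>y+q\<bar>))"

lemma Wp_adj_p:
  assumes s: "s = 1 \<or> s = -1" and "\<bar>p - p0\<bar> = 1"
    and "\<bar>x+p\<bar> + \<bar>y+q\<bar> \<le> int n" "\<bar>x+p0\<bar> + \<bar>y+q\<bar> \<le> int n"
  shows "(Wp n s x y p0 q, Wp n s x y p q) \<in> octRel n"
  using assms unfolding octRel_def Wp_def
  by (auto simp: octAdj_iff abs_mult)

lemma Wp_adj_q:
  assumes s: "s = 1 \<or> s = -1" and "\<bar>q - q0\<bar> = 1"
    and "\<bar>x+p\<bar> + \<bar>y+q\<bar> \<le> int n" "\<bar>x+p\<bar> + \<bar>y+q0\<bar> \<le> int n"
  shows "(Wp n s x y p q0, Wp n s x y p q) \<in> octRel n"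
  using assms unfolding octRel_def Wp_def
  by (auto simp: octAdj_iff abs_mult)

lemma path_Wp:
  assumes s: "s = 1 \<or> s = -1"
  shows "k = nat (\<bar>p\<bar> + \<bar>q\<bar>) \<Longrightarrow>
    (\<forall>p' q'. \<bar>p'\<bar> \<le> \<bar>p\<bar> \<and> 0 \<le> p' * p \<and> \<bar>q'\<bar> \<le> \<bar>q\<bar> \<and> 0 \<le> q' * q \<longrightarrow> \<bar>x+p'\<bar> + \<bar>y+q'\<bar> \<le> int n)
    \<Longrightarrow> (Wp n s x y 0 0, Wp n s x y p q) \<in> octRel n ^^ k"
proof (induction k arbitrary: p q)
  case 0
  then have "p = 0" "q = 0" by arith+
  then show ?case by simp
next
  case (Suc k)
  show ?case
  proof (cases "p = 0")
    case False
    define p0 where "p0 = p - sgn p"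
    have a: "\<bar>p0\<bar> = \<bar>p\<bar> - 1" "0 \<le> p0 * p" "\<bar>p - p0\<bar> = 1"
      using False unfolding p0_def by (auto simp: sgn_if intro: mult_nonpos_nonpos)
    have k: "k = nat (\<bar>p0\<bar> + \<bar>q\<bar>)" using Suc.prems(1) a by simp
    have c: "\<forall>p' q'. \<bar>p'\<bar> \<le> \<bar>p0\<bar> \<and> 0 \<le> p' * p0 \<and> \<bar>q'\<bar> \<le> \<bar>q\<bar> \<and> 0 \<le> q' * q \<longrightarrow> \<bar>x+p'\<bar> + \<bar>y+q'\<bar> \<le> int n"
    proof (intro allI impI)
      fix p' q' assume h: "\<bar>p'\<bar> \<le> \<bar>p0\<bar> \<and> 0 \<le> p' * p0 \<and> \<bar>q'\<bar> \<le> \<bar>q\<bar> \<and> 0 \<le> q' * q"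
      have "\<bar>p'\<bar> \<le> \<bar>p\<bar> \<and> 0 \<le> p' * p"
        using h False unfolding p0_def by (auto simp: sgn_if zero_le_mult_iff split: if_splits)
      then show "\<bar>x+p'\<bar> + \<bar>y+q'\<bar> \<le> int n" using Suc.prems(2) h by blast
    qed
    have ih: "(Wp n s x y 0 0, Wp n s x y p0 q) \<in> octRel n ^^ k" using Suc.IH[OF k c] .
    have e1: "\<bar>x+p\<bar> + \<bar>y+q\<bar> \<le> int n" using Suc.prems(2)[rule_format, of p q] by simp
    have e2: "\<bar>x+p0\<bar> + \<bar>y+q\<bar> \<le> int n" using c[rule_format, of p0 q] by simp
    show ?thesis using relpow_Suc_I[OF ih Wp_adj_p[OF s a(3) e1 e2]] .
  next
    case True
    then have qn: "q \<noteq> 0" using Suc.prems(1) by auto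
    define q0 where "q0 = q - sgn q"
    have a: "\<bar>q0\<bar> = \<bar>q\<bar> - 1" "0 \<le> q0 * q" "\<bar>q - q0\<bar> = 1"
      using qn unfolding q0_def by (auto simp: sgn_if intro: mult_nonpos_nonpos)
    have k: "k = nat (\<bar>p\<bar> + \<bar>q0\<bar>)" using Suc.prems(1) a by simp
    have c: "\<forall>p' q'. \<bar>p'\<bar> \<le> \<bar>p\<bar> \<and> 0 \<le> p' * p \<and> \<bar>q'\<bar> \<le> \<bar>q0\<bar> \<and> 0 \<le> q' * q0 \<longrightarrow> \<bar>x+p'\<bar> + \<bar>y+q'\<bar> \<le> int n"
    proof (intro allI impI)
      fix p' q' assume h: "\<bar>p'\<bar> \<le> \<bar>p\<bar> \<and> 0 \<le> p' * p \<and> \<bar>q'\<bar> \<le> \<bar>q0\<bar> \<and> 0 \<le> q' * q0"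
      have "\<bar>q'\<bar> \<le> \<bar>q\<bar> \<and> 0 \<le> q' * q"
        using h qn unfolding q0_def by (auto simp: sgn_if zero_le_mult_iff split: if_splits)
      then show "\<bar>x+p'\<bar> + \<bar>y+q'\<bar> \<le> int n" using Suc.prems(2) h by blast
    qed
    have ih: "(Wp n s x y 0 0, Wp n s x y p q0) \<in> octRel n ^^ k" using Suc.IH[OF k c] .
    have e1: "\<bar>x+p\<bar> + \<bar>y+q\<bar> \<le> int n" using Suc.prems(2)[rule_format, of p q] by simp
    have e2: "\<bar>x+p\<bar> + \<bar>y+q0\<bar> \<le> int n" using c[rule_format, of p q0] by simp
    show ?thesis using relpow_Suc_I[OF ih Wp_adj_q[OF s a(3) e1 e2]] .
  qed
qed

lemma octRel_sym: "(v,w) \<in> octRel n \<Longrightarrow> (w,v) \<in> octRel n"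
  unfolding octRel_def octAdj_def by (auto simp: abs_minus_commute)

lemma relpow_sym: "(v,w) \<in> octRel n ^^ k \<Longrightarrow> (w,v) \<in> octRel n ^^ k"
proof (induction k arbitrary: w)
  case 0 then show ?case by simp
next
  case (Suc k)
  then obtain m where "(v,m) \<in> octRel n ^^ k" "(m,w) \<in> octRel n" by auto
  then show ?case using Suc.IH relpow_Suc_I2 octRel_sym by metis
qed

lemma relpow_trans: "(a,b) \<in> octRel n ^^ i \<Longrightarrow> (b,c) \<in> octRel n ^^ j \<Longrightarrow> (a,c) \<in> octRel n ^^ (i+j)"
  by (auto simp: relpow_add)

lemma toward0: "\<bar>p'\<bar> \<le> \<bar>x\<bar> \<Longrightarrow> 0 \<le> p' * (- x) \<Longrightarrow> \<bar>(x::int) + p'\<bar> \<le> \<bar>x\<bar>"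
  unfolding zero_le_mult_iff by arith

lemma connect_hub:
  assumes "v \<in> octV n"
  shows "\<exists>k. (v, (0,0,int n)) \<in> octRel n ^^ k"
proof -
  obtain x y z where v: "v = (x,y,z)" by (cases v) auto
  have sum: "\<bar>x\<bar> + \<bar>y\<bar> + \<bar>z\<bar> = int n" using assms v by (simp add: octV_def)
  have c1: "\<forall>p' q'. \<bar>p'\<bar> \<le> \<bar>-x\<bar> \<and> 0 \<le> p' * (-x) \<and> \<bar>q'\<bar> \<le> \<bar>-y\<bar> \<and> 0 \<le> q' * (-y) \<longrightarrow> \<bar>x+p'\<bar> + \<bar>y+q'\<bar> \<le> int n"
  proof (intro allI impI)
    fix p' q' assume h: "\<bar>p'\<bar> \<le> \<bar>-x\<bar> \<and> 0 \<le> p' * (-x) \<and> \<bar>q'\<bar> \<le> \<bar>-y\<bar> \<and> 0 \<le> q' * (-y)"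
    then have "\<bar>x+p'\<bar> \<le> \<bar>x\<bar>" "\<bar>y+q'\<bar> \<le> \<bar>y\<bar>" using toward0 by auto
    then show "\<bar>x+p'\<bar> + \<bar>y+q'\<bar> \<le> int n" using sum by linarith
  qed
  show ?thesis
  proof (cases "z \<ge> 0")
    case True
    have "Wp n 1 x y 0 0 = v" using True sum v by (simp add: Wp_def)
    moreover have "Wp n 1 x y (-x) (-y) = (0,0,int n)" by (simp add: Wp_def)
    ultimately show ?thesis using path_Wp[of 1 _ "-x" "-y" x y n, OF _ refl c1] by auto
  next
    case False
    have "Wp n (-1) x y 0 0 = v" using False sum v by (simp add: Wp_def)
    moreover have "Wp n (-1) x y (-x) (-y) = (0,0,- int n)" by (simp add: Wp_def)
    ultimately have 1: "\<exists>k. (v, (0,0,- int n)) \<in> octRel n ^^ k"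
      using path_Wp[of "-1" _ "-x" "-y" x y n, OF _ refl c1] by auto
    have c2: "\<forall>p' q'. \<bar>p'\<bar> \<le> \<bar>int n\<bar> \<and> 0 \<le> p' * int n \<and> \<bar>q'\<bar> \<le> \<bar>0\<bar> \<and> 0 \<le> q' * 0 \<longrightarrow> \<bar>0+p'\<bar> + \<bar>0+q'\<bar> \<le> int n"
      by auto
    have "Wp n (-1) 0 0 0 0 = (0,0,- int n)" "Wp n (-1) 0 0 (int n) 0 = (int n, 0, 0)" by (simp_all add: Wp_def)
    then have 2: "\<exists>k. ((0,0,- int n), (int n, 0, 0)) \<in> octRel n ^^ k"
      using path_Wp[of "-1" _ "int n" 0 0 0 n, OF _ refl c2] by auto
    have c3: "\<forall>p' q'. \<bar>p'\<bar> \<le> \<bar>- int n\<bar> \<and> 0 \<le> p' * (- int n) \<and> \<bar>q'\<bar> \<le> \<bar>-0\<bar> \<and> 0 \<le> q' * (-0) \<longrightarrow> \<bar>int n+p'\<bar> + \<bar>0+q'\<bar> \<le> int n"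
      using toward0[of _ "int n"] by auto
    have "Wp n 1 (int n) 0 0 0 = (int n, 0, 0)" "Wp n 1 (int n) 0 (- int n) (-0) = (0, 0, int n)" by (simp_all add: Wp_def)
    then have 3: "\<exists>k. ((int n, 0, 0), (0,0,int n)) \<in> octRel n ^^ k"
      using path_Wp[of 1 _ "- int n" "-0" "int n" 0 n, OF _ refl c3] by auto
    from 1 2 3 show ?thesis using relpow_trans by metis
  qed
qed

lemma connected: "v \<in> octV n \<Longrightarrow> w \<in> octV n \<Longrightarrow> \<exists>k. (v,w) \<in> octRel n ^^ k"
  using connect_hub[of v n] connect_hub[of w n] relpow_sym relpow_trans by metis

lemma dist_path: "v \<in> octV n \<Longrightarrow> w \<in> octV n \<Longrightarrow> (v,w) \<in> octRel n ^^ (octDist n v w)"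
  unfolding octDist_def using connected by (rule LeastI_ex)

lemma dist_le: "(v,w) \<in> octRel n ^^ k \<Longrightarrow> octDist n v w \<le> k"
  unfolding octDist_def by (rule Least_le)

lemma coord_bound: "(v,w) \<in> octRel n ^^ k \<Longrightarrow>
   \<bar>fst v - fst w\<bar> \<le> int k \<and> \<bar>fst (snd v) - fst (snd w)\<bar> \<le> int k \<and> \<bar>snd (snd v) - snd (snd w)\<bar> \<le> int k"
proof (induction k arbitrary: w)
  case 0 then show ?case by simp
next
  case (Suc k)
  then obtain m where m: "(v,m) \<in> octRel n ^^ k" "(m,w) \<in> octRel n" by auto
  then have "\<bar>fst m - fst w\<bar> \<le> 1 \<and> \<bar>fst (snd m) - fst (snd w)\<bar> \<le> 1 \<and> \<bar>snd (snd m) - snd (snd w)\<bar> \<le> 1"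
    by (auto simp: octRel_def octAdj_def)
  with Suc.IH[OF m(1)] show ?case by auto
qed

lemma dist_coord: "v \<in> octV n \<Longrightarrow> w \<in> octV n \<Longrightarrow>
   \<bar>fst v - fst w\<bar> \<le> int (octDist n v w) \<and> \<bar>fst (snd v) - fst (snd w)\<bar> \<le> int (octDist n v w) \<and> \<bar>snd (snd v) - snd (snd w)\<bar> \<le> int (octDist n v w)"
  using coord_bound[OF dist_path] by blast

lemma dist_pos: "v \<in> octV n \<Longrightarrow> w \<in> octV n \<Longrightarrow> v \<noteq> w \<Longrightarrow> octDist n v w \<ge> 1"
  using dist_path[of v n w] by (cases "octDist n v w") auto


definition rq :: "nat \<Rightarrow> int \<Rightarrow> int \<Rightarrow> int \<times> int" where
  "rq r s a = (if r = 0 then (a, s-a) else if r = 1 then (s-a, -a) else if r = 2 then (-a, a-s) else (a-s, a))"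

lemma rq_abs: "0 \<le> a \<Longrightarrow> a < s \<Longrightarrow> \<bar>fst (rq r s a)\<bar> + \<bar>snd (rq r s a)\<bar> = s"
  by (auto simp: rq_def)

lemma rq_inj: "0 \<le> a \<Longrightarrow> a < s \<Longrightarrow> 0 \<le> a' \<Longrightarrow> a' < s' \<Longrightarrow> r < 4 \<Longrightarrow> r' < 4 \<Longrightarrow>
   rq r s a = rq r' s' a' \<Longrightarrow> r = r' \<and> s = s' \<and> a = a'"
proof -
  assume h: "0 \<le> a" "a < s" "0 \<le> a'" "a' < s'" "r < 4" "r' < 4" "rq r s a = rq r' s' a'"
  have r: "r = 0 \<or> r = 1 \<or> r = 2 \<or> r = 3" using h(5) by arith
  have r': "r' = 0 \<or> r' = 1 \<or> r' = 2 \<or> r' = 3" using h(6) by arith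
  have e: "(if r = 0 then (a, s-a) else if r = 1 then (s-a, -a) else if r = 2 then (-a, a-s) else (a-s, a))
    = (if r' = 0 then (a', s'-a') else if r' = 1 then (s'-a', -a') else if r' = 2 then (-a', a'-s') else (a'-s', a'))"
    using h(7) by (simp add: rq_def)
  from r r' e show ?thesis using h(1-4) by (elim disjE) auto
qed

lemma family_sum:
  assumes v: "v = (x,y,z)" "v \<in> octV n" and z: "z \<noteq> 0"
  shows "4 * harm (nat \<bar>z\<bar>) \<le> (\<Sum>w\<in>octV n - {v}. inverse ((real (octDist n v w))\<^sup>2))"
proof -
  define S where "S = nat \<bar>z\<bar>"
  define \<sigma> where "\<sigma> = sgn z"
  have sig: "\<sigma> = 1 \<or> \<sigma> = -1" using z by (auto simp: \<sigma>_def sgn_if)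
  have sum: "\<bar>x\<bar> + \<bar>y\<bar> + \<bar>z\<bar> = int n" using v by (simp add: octV_def)
  have v0: "Wp n \<sigma> x y 0 0 = v" using v sum z by (auto simp: Wp_def \<sigma>_def sgn_if)
  define Dom where "Dom = (SIGMA s:{1..S}. {0..<s} \<times> {0..<(4::nat)})"
  define \<phi> where "\<phi> = (\<lambda>(s::nat,a::nat,r::nat). Wp n \<sigma> x y (fst (rq r (int s) (int a))) (snd (rq r (int s) (int a))))"
  define f where "f = (\<lambda>w. inverse ((real (octDist n v w))\<^sup>2))"
  have fin: "finite (octV n)"
  proof -
    have "octV n \<subseteq> {- int n..int n} \<times> {- int n..int n} \<times> {- int n..int n}"
      by (auto simp: octV_def)
    then show ?thesis by (rule finite_subset) auto
  qed
  have key: "\<phi> t \<in> octV n - {v} \<and> inverse ((real (fst t))\<^sup>2) \<le> f (\<phi> t)" if t: "t \<in> Dom" for t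
  proof -
    obtain s a r where t': "t = (s,a,r)" by (cases t) auto
    have sa: "1 \<le> s" "s \<le> S" "a < s" "r < 4" using t t' by (auto simp: Dom_def)
    define p where "p = fst (rq r (int s) (int a))"
    define q where "q = snd (rq r (int s) (int a))"
    have pq: "\<bar>p\<bar> + \<bar>q\<bar> = int s" using rq_abs[of "int a" "int s" r] sa by (simp add: p_def q_def)
    have sS: "int s \<le> \<bar>z\<bar>" using sa S_def by simp
    have c: "\<forall>p' q'. \<bar>p'\<bar> \<le> \<bar>p\<bar> \<and> 0 \<le> p' * p \<and> \<bar>q'\<bar> \<le> \<bar>q\<bar> \<and> 0 \<le> q' * q \<longrightarrow> \<bar>x+p'\<bar> + \<bar>y+q'\<bar> \<le> int n"
    proof (intro allI impI)
      fix p' q' assume h: "\<bar>p'\<bar> \<le> \<bar>p\<bar> \<and> 0 \<le> p' * p \<and> \<bar>q'\<bar> \<le> \<bar>q\<bar> \<and> 0 \<le> q' * q"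
      have "\<bar>x+p'\<bar> \<le> \<bar>x\<bar> + \<bar>p'\<bar>" "\<bar>y+q'\<bar> \<le> \<bar>y\<bar> + \<bar>q'\<bar>" by (rule abs_triangle_ineq)+
      then show "\<bar>x+p'\<bar> + \<bar>y+q'\<bar> \<le> int n" using h pq sS sum by linarith
    qed
    have path: "(v, \<phi> t) \<in> octRel n ^^ nat (\<bar>p\<bar> + \<bar>q\<bar>)"
      using path_Wp[OF sig refl c] v0 by (simp add: \<phi>_def t' p_def q_def)
    have phit: "\<phi> t = Wp n \<sigma> x y p q" by (simp add: \<phi>_def t' p_def q_def)
    have sabs: "\<bar>\<sigma>\<bar> = 1" using sig by auto
    have pqn: "\<bar>x+p\<bar> + \<bar>y+q\<bar> \<le> int n" using c[rule_format, of p q] by simp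
    have inV: "\<phi> t \<in> octV n"
      unfolding phit Wp_def octV_def using pqn sabs by (simp add: abs_mult)
    have ne: "\<phi> t \<noteq> v"
    proof
      assume eq: "\<phi> t = v"
      have "fst (\<phi> t) = fst v" "fst (snd (\<phi> t)) = fst (snd v)" using eq by simp_all
      then have "p = 0" "q = 0" unfolding phit v(1) Wp_def by simp_all
      then show False using pq sa by simp
    qed
    have d1: "octDist n v (\<phi> t) \<ge> 1" using dist_pos[OF v(2) inV] ne by auto
    have d2: "octDist n v (\<phi> t) \<le> s" using dist_le[OF path] pq by simp
    have "inverse ((real s)\<^sup>2) \<le> f (\<phi> t)" unfolding f_def
      using d1 d2 by (intro le_imp_inverse_le power_mono) auto
    then show ?thesis using inV ne t' by simp
  qed
  have inj: "inj_on \<phi> Dom"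
  proof (rule inj_onI)
    fix t t' assume tt: "t \<in> Dom" "t' \<in> Dom" "\<phi> t = \<phi> t'"
    obtain s a r where t: "t = (s,a,r)" by (cases t) auto
    obtain s' a' r' where t2: "t' = (s',a',r')" by (cases t') auto
    have e1: "fst (\<phi> t) = fst (\<phi> t')" "fst (snd (\<phi> t)) = fst (snd (\<phi> t'))" using tt(3) by simp_all
    have "fst (rq r (int s) (int a)) = fst (rq r' (int s') (int a'))"
      using e1(1) unfolding t t2 \<phi>_def Wp_def by simp
    moreover have "snd (rq r (int s) (int a)) = snd (rq r' (int s') (int a'))"
      using e1(2) unfolding t t2 \<phi>_def Wp_def by simp
    ultimately have "rq r (int s) (int a) = rq r' (int s') (int a')" by (rule prod_eqI)
    then have "r = r' \<and> int s = int s' \<and> int a = int a'"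
      using rq_inj[of "int a" "int s" "int a'" "int s'" r r'] tt(1,2) t t2 by (auto simp: Dom_def)
    then show "t = t'" using t t2 by simp
  qed
  have "(\<Sum>t\<in>Dom. inverse ((real (fst t))\<^sup>2)) \<le> (\<Sum>t\<in>Dom. f (\<phi> t))"
    using key by (intro sum_mono) auto
  also have "\<dots> = (\<Sum>w\<in>\<phi> ` Dom. f w)" using sum.reindex[OF inj, of f] by (simp add: comp_def)
  also have "\<dots> \<le> (\<Sum>w\<in>octV n - {v}. f w)"
  proof (rule sum_mono2)
    show "finite (octV n - {v})" using fin by simp
    show "\<phi> ` Dom \<subseteq> octV n - {v}" using key by blast
    show "\<And>b. b \<in> octV n - {v} - \<phi> ` Dom \<Longrightarrow> 0 \<le> f b" by (simp add: f_def)
  qed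
  finally have A: "(\<Sum>t\<in>Dom. inverse ((real (fst t))\<^sup>2)) \<le> (\<Sum>w\<in>octV n - {v}. f w)" .
  have "(\<Sum>t\<in>Dom. inverse ((real (fst t))\<^sup>2)) = (\<Sum>s\<in>{1..S}. \<Sum>u\<in>{0..<s} \<times> {0..<(4::nat)}. inverse ((real s)\<^sup>2))"
    unfolding Dom_def by (subst sum.Sigma) (auto simp: case_prod_beta)
  also have "\<dots> = (\<Sum>s\<in>{1..S}. 4 * inverse (real s))"
    by (intro sum.cong refl) (auto simp: card_cartesian_product power2_eq_square field_simps)
  also have "\<dots> = 4 * harm S" by (simp add: harm_def sum_distrib_left)
  finally show ?thesis using A by (simp add: S_def f_def)
qed

lemma family_sum':
  assumes v: "v = (x,y,z)" "v \<in> octV n"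
  shows "4 * harm (nat \<bar>z\<bar>) \<le> (\<Sum>w\<in>octV n - {v}. inverse ((real (octDist n v w))\<^sup>2))"
proof (cases "z = 0")
  case True
  then show ?thesis by (simp add: sum_nonneg harm_def)
next
  case False
  then show ?thesis using family_sum[OF v] by simp
qed

definition rot :: "vtx \<Rightarrow> vtx" where "rot v = (fst (snd v), snd (snd v), fst v)"
definition rotinv :: "vtx \<Rightarrow> vtx" where "rotinv v = (snd (snd v), fst v, fst (snd v))"

lemma rot_inv[simp]: "rotinv (rot v) = v" "rot (rotinv v) = v"
  by (auto simp: rot_def rotinv_def)

lemma rot_V[simp]: "rot v \<in> octV n \<longleftrightarrow> v \<in> octV n"
  by (cases v) (auto simp: rot_def octV_def)

lemma rot_rel: "(v,w) \<in> octRel n \<Longrightarrow> (rot v, rot w) \<in> octRel n"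
  by (cases v; cases w) (auto simp: rot_def octRel_def octAdj_def octV_def)

lemma rotinv_rel: "(v,w) \<in> octRel n \<Longrightarrow> (rotinv v, rotinv w) \<in> octRel n"
  by (cases v; cases w) (auto simp: rotinv_def octRel_def octAdj_def octV_def)

lemma map_relpow:
  assumes "\<And>a b. (a,b) \<in> octRel n \<Longrightarrow> (f a, f b) \<in> octRel n"
  shows "(v,w) \<in> octRel n ^^ k \<Longrightarrow> (f v, f w) \<in> octRel n ^^ k"
proof (induction k arbitrary: w)
  case 0 then show ?case by simp
next
  case (Suc k)
  then obtain m where "(v,m) \<in> octRel n ^^ k" "(m,w) \<in> octRel n" by auto
  then show ?case using Suc.IH assms relpow_Suc_I by metis
qed

lemma rot_relpow: "(rot v, rot w) \<in> octRel n ^^ k \<longleftrightarrow> (v,w) \<in> octRel n ^^ k"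
  using map_relpow[of n rot v w k, OF rot_rel] map_relpow[of n rotinv "rot v" "rot w" k, OF rotinv_rel]
  by auto

lemma rot_dist: "octDist n (rot v) (rot w) = octDist n v w"
  unfolding octDist_def rot_relpow ..

lemma rot_sum: "(\<Sum>w\<in>octV n - {rot v}. g (octDist n (rot v) w)) = (\<Sum>w\<in>octV n - {v}. g (octDist n v w))"
proof -
  have inj: "inj_on rot (octV n - {v})" by (metis inj_onI rot_inv(1))
  have img: "rot ` (octV n - {v}) = octV n - {rot v}"
  proof
    show "rot ` (octV n - {v}) \<subseteq> octV n - {rot v}" by (auto dest: arg_cong[of _ _ rotinv])
    show "octV n - {rot v} \<subseteq> rot ` (octV n - {v})"
    proof
      fix w assume "w \<in> octV n - {rot v}"
      then have "rotinv w \<in> octV n" "rotinv w \<noteq> v" "w = rot (rotinv w)"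
        by (metis DiffD1 rot_V rot_inv(2), metis DiffD2 singletonI rot_inv(2), metis rot_inv(2))
      then show "w \<in> rot ` (octV n - {v})" by blast
    qed
  qed
  have "(\<Sum>w\<in>octV n - {rot v}. g (octDist n (rot v) w)) = (\<Sum>w\<in>octV n - {v}. g (octDist n (rot v) (rot w)))"
    using sum.reindex[OF inj, of "\<lambda>w. g (octDist n (rot v) w)"] img by (simp add: comp_def)
  also have "\<dots> = (\<Sum>w\<in>octV n - {v}. g (octDist n v w))" by (simp add: rot_dist)
  finally show ?thesis .
qed

lemma Zsum_lower:
  assumes v: "v \<in> octV n" and n: "n \<ge> 1"
  shows "4 * (ln (real n + 1) - ln 3) \<le> (\<Sum>w\<in>octV n - {v}. inverse ((real (octDist n v w))\<^sup>2))
    \<and> 0 < (\<Sum>w\<in>octV n - {v}. inverse ((real (octDist n v w))\<^sup>2))"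
proof -
  obtain x y z where vv: "v = (x,y,z)" by (cases v) auto
  define F where "F = (\<Sum>w\<in>octV n - {v}. inverse ((real (octDist n v w))\<^sup>2))"
  have sum: "\<bar>x\<bar> + \<bar>y\<bar> + \<bar>z\<bar> = int n" using v vv by (simp add: octV_def)
  have hz: "4 * harm (nat \<bar>z\<bar>) \<le> F" using family_sum'[OF vv v] by (simp add: F_def)
  have r1: "rot v = (y,z,x)" by (simp add: vv rot_def)
  have hx: "4 * harm (nat \<bar>x\<bar>) \<le> F"
    using family_sum'[OF r1 rot_V[THEN iffD2, OF v]] v rot_sum[where n=n and v=v and g="\<lambda>d. inverse ((real d)\<^sup>2)"] by (simp add: F_def)
  have r2: "rot (rot v) = (z,x,y)" by (simp add: vv rot_def)
  have hy: "4 * harm (nat \<bar>y\<bar>) \<le> F"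
    using family_sum'[OF r2 rot_V[THEN iffD2, OF rot_V[THEN iffD2, OF v]]] v rot_sum[where n=n and v=v and g="\<lambda>d. inverse ((real d)\<^sup>2)"]
      rot_sum[where n=n and v="rot v" and g="\<lambda>d. inverse ((real d)\<^sup>2)"] by (simp add: F_def)
  obtain m where m: "m = \<bar>x\<bar> \<or> m = \<bar>y\<bar> \<or> m = \<bar>z\<bar>" "3 * m \<ge> int n"
  proof -
    define M where "M = max \<bar>x\<bar> (max \<bar>y\<bar> \<bar>z\<bar>)"
    have "M = \<bar>x\<bar> \<or> M = \<bar>y\<bar> \<or> M = \<bar>z\<bar>" "3 * M \<ge> int n" using sum unfolding M_def by (auto simp: max_def)
    then show ?thesis using that by blast
  qed
  have hm: "4 * harm (nat m) \<le> F" using m(1) hx hy hz by auto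
  have m0: "0 \<le> m" using m(1) by auto
  have "ln (real n + 1) - ln 3 = ln ((real n + 1) / 3)" by (simp add: ln_div)
  also have "\<dots> \<le> ln (real (nat m) + 1)"
  proof (rule ln_mono)
    show "0 < (real n + 1) / 3" by simp
    have "3 * real_of_int m \<ge> real n" using m(2) by (metis of_int_le_iff of_int_mult of_int_numeral of_int_of_nat_eq)
    then show "(real n + 1) / 3 \<le> real (nat m) + 1" using m0 by simp
  qed
  also have "\<dots> \<le> harm (nat m)" by (rule ln_le_harm)
  finally have "4 * (ln (real n + 1) - ln 3) \<le> 4 * harm (nat m)" by simp
  moreover have "0 < (harm (nat m) :: real)"
  proof -
    have "1 \<le> m" using m(2) n by linarith
    then have "0 < ln (real (nat m) + 1)" by simp
    then show ?thesis using ln_le_harm[of "nat m"] by linarith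
  qed
  ultimately show ?thesis using hm unfolding F_def by linarith
qed


lemma fin_V: "finite (octV n)"
proof -
  have "octV n \<subseteq> {- int n..int n} \<times> {- int n..int n} \<times> {- int n..int n}"
    by (auto simp: octV_def)
  then show ?thesis by (rule finite_subset) auto
qed

abbreviation T where "T n a \<equiv> (\<Sum>w\<in>octV n - {a}. inverse ((real (octDist n a w))\<^sup>2))"

lemma pmf_choice:
  assumes a: "a \<in> octV n" and n: "n \<ge> 1"
  shows "pmf (choice_pmf n a) b = (if b \<in> octV n - {a} then octZ n a * inverse ((real (octDist n a b))\<^sup>2) else 0)"
proof -
  define f where "f = (\<lambda>v. if v \<in> octV n - {a} then octZ n a * inverse ((real (octDist n a v))\<^sup>2) else 0)"
  have Tpos: "0 < T n a" using Zsum_lower[OF a n] by blast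
  have Z: "octZ n a = inverse (T n a)" by (simp add: octZ_def)
  have nn: "\<And>x. 0 \<le> f x" unfolding f_def Z using Tpos by auto
  have "(\<integral>\<^sup>+x. ennreal (f x) \<partial>count_space UNIV) = (\<Sum>x\<in>octV n - {a}. ennreal (f x))"
    by (rule nn_integral_count_space') (auto simp: f_def fin_V)
  also have "\<dots> = ennreal (\<Sum>x\<in>octV n - {a}. f x)" using nn by simp
  also have "(\<Sum>x\<in>octV n - {a}. f x) = octZ n a * T n a"
    unfolding f_def by (simp add: sum_distrib_left)
  also have "\<dots> = 1" using Tpos Z by simp
  finally have p: "(\<integral>\<^sup>+x. ennreal (f x) \<partial>count_space UNIV) = 1" by simp
  show ?thesis unfolding choice_pmf_def f_def[symmetric]
    using pmf_embed_pmf[OF nn p] by (simp add: f_def)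
qed

lemma prob_pair:
  assumes a: "a \<in> octV n" and b: "b \<in> octV n" and ab: "a \<noteq> b"
  shows "measure_pmf.prob (osw_pmf n) {c. c a = b' \<and> c b = u'} = pmf (choice_pmf n a) b' * pmf (choice_pmf n b) u'"
proof -
  define B where "B = (\<lambda>x. if x = a then {b'} else if x = b then {u'} else (UNIV :: vtx set))"
  have e: "{c. c a = b' \<and> c b = u'} = Pi (octV n) B"
  proof (rule set_eqI, rule iffI)
    fix c assume "c \<in> {c. c a = b' \<and> c b = u'}"
    then show "c \<in> Pi (octV n) B" by (auto simp: B_def Pi_def)
  next
    fix c assume h: "c \<in> Pi (octV n) B"
    have "c a \<in> B a" "c b \<in> B b" using Pi_mem[OF h a] Pi_mem[OF h b] .
    then show "c \<in> {c. c a = b' \<and> c b = u'}" using ab by (simp add: B_def)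
  qed
  have "measure_pmf.prob (osw_pmf n) (Pi (octV n) B) = (\<Prod>x\<in>octV n. measure_pmf.prob (choice_pmf n x) (B x))"
    unfolding osw_pmf_def by (rule measure_Pi_pmf_Pi[OF fin_V])
  also have "\<dots> = measure_pmf.prob (choice_pmf n a) (B a) * (\<Prod>x\<in>octV n - {a}. measure_pmf.prob (choice_pmf n x) (B x))"
    by (rule prod.remove[OF fin_V a])
  also have "(\<Prod>x\<in>octV n - {a}. measure_pmf.prob (choice_pmf n x) (B x)) =
      measure_pmf.prob (choice_pmf n b) (B b) * (\<Prod>x\<in>octV n - {a} - {b}. measure_pmf.prob (choice_pmf n x) (B x))"
    by (rule prod.remove) (use fin_V b ab in auto)
  also have "(\<Prod>x\<in>octV n - {a} - {b}. measure_pmf.prob (choice_pmf n x) (B x)) = 1"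
    by (intro prod.neutral) (auto simp: B_def)
  finally show ?thesis using ab by (simp add: e B_def measure_pmf_single)
qed

definition phi :: "int \<Rightarrow> real" where
  "phi k = (if \<bar>k\<bar> \<le> 2 then 1/4 else 1 / (real_of_int \<bar>k\<bar> * (real_of_int \<bar>k\<bar> - 1)))"

lemma phi_nonneg: "0 \<le> phi k"
  by (auto simp: phi_def)

lemma phi_sum_sym: "M \<ge> 2 \<Longrightarrow> sum phi {- int M..int M} = 9/4 - 2 / real M"
proof (induction M rule: nat_induct_at_least)
  case base
  have "{- int 2..int 2} = {-2,-1,0,1,2}" by auto
  then show ?case by (simp add: phi_def)
next
  case (Suc M)
  have e: "{- int (Suc M)..int (Suc M)} = insert (- (int M + 1)) (insert (int M + 1) {- int M..int M})" by auto
  have p1: "phi (- (int M + 1)) = 1 / ((real M + 1) * real M)" using Suc.hyps by (simp add: phi_def)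
  have p2: "phi (int M + 1) = 1 / ((real M + 1) * real M)" using Suc.hyps by (simp add: phi_def)
  have "sum phi {- int (Suc M)..int (Suc M)} = phi (- (int M + 1)) + phi (int M + 1) + sum phi {- int M..int M}"
    unfolding e by (subst sum.insert; simp)+
  also have "\<dots> = 2 / ((real M + 1) * real M) + (9/4 - 2 / real M)" using p1 p2 Suc.IH by simp
  also have "\<dots> = 9/4 - 2 / real (Suc M)"
  proof -
    have h1: "real M > 0" "real M + 1 > 0" using Suc.hyps by auto
    then have "2 / ((real M + 1) * real M) = 2 / real M - 2 / (real M + 1)" by (simp add: field_simps)
    then show ?thesis by simp
  qed
  finally show ?case .
qed

lemma phi_sum_le: "(\<Sum>i\<in>{- int n..int n}. phi (i - c)) \<le> 9/4"
proof -
  define M where "M = nat (int n + \<bar>c\<bar>) + 2"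
  have inj: "inj_on (\<lambda>i. i - c) {- int n..int n}" by (auto simp: inj_on_def)
  have "(\<Sum>i\<in>{- int n..int n}. phi (i - c)) = sum phi ((\<lambda>i. i - c) ` {- int n..int n})"
    using sum.reindex[OF inj, of phi] by (simp add: comp_def)
  also have "\<dots> \<le> sum phi {- int M..int M}"
    by (rule sum_mono2) (auto simp: M_def phi_nonneg)
  also have "\<dots> = 9/4 - 2 / real M" by (rule phi_sum_sym) (simp add: M_def)
  also have "\<dots> \<le> 9/4" by simp
  finally show ?thesis .
qed

lemma inv_le_phi:
  fixes D1 D2 :: real
  assumes "2 \<le> D1" "2 \<le> D2" "real_of_int \<bar>i\<bar> \<le> D1" "real_of_int \<bar>i\<bar> \<le> D2 + 1"
  shows "inverse (D1 * D2) \<le> phi i"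
proof (cases "\<bar>i\<bar> \<le> 2")
  case True
  have "4 \<le> D1 * D2" using assms mult_mono[of 2 D1 2 D2] by simp
  then show ?thesis using True by (simp add: phi_def inverse_eq_divide)
next
  case False
  then have i3: "3 \<le> real_of_int \<bar>i\<bar>" by simp
  have "real_of_int \<bar>i\<bar> * (real_of_int \<bar>i\<bar> - 1) \<le> D1 * D2"
    using assms i3 by (intro mult_mono) auto
  moreover have "phi i = inverse (real_of_int \<bar>i\<bar> * (real_of_int \<bar>i\<bar> - 1))"
    using False by (simp add: phi_def inverse_eq_divide)
  moreover have "0 < real_of_int \<bar>i\<bar> * (real_of_int \<bar>i\<bar> - 1)" using i3 by simp
  ultimately show ?thesis by (metis le_imp_inverse_le)
qed

lemma weight_le:
  fixes D1 D2 :: real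
  assumes "2 \<le> D1" "2 \<le> D2" "real_of_int \<bar>i\<bar> \<le> D1" "real_of_int \<bar>i\<bar> \<le> D2 + 1"
    "real_of_int \<bar>j\<bar> \<le> D1" "real_of_int \<bar>j\<bar> \<le> D2 + 1"
  shows "inverse (D1\<^sup>2) * inverse (D2\<^sup>2) \<le> phi i * phi j"
proof -
  have "inverse (D1\<^sup>2) * inverse (D2\<^sup>2) = inverse (D1 * D2) * inverse (D1 * D2)"
    by (simp add: power2_eq_square field_simps)
  also have "\<dots> \<le> phi i * phi j"
    using inv_le_phi[OF assms(1-4)] inv_le_phi[OF assms(1,2,5,6)] assms(1,2) phi_nonneg[of i]
    by (intro mult_mono) auto
  finally show ?thesis .
qed

lemma sum3: "(\<Sum>i\<in>A. \<Sum>j\<in>B. \<Sum>s\<in>C. h (i,j,s)) = (\<Sum>t\<in>A\<times>B\<times>C. h t)"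
proof -
  have "(\<Sum>i\<in>A. \<Sum>j\<in>B. \<Sum>s\<in>C. h (i,j,s)) = (\<Sum>i\<in>A. \<Sum>(j,s)\<in>B\<times>C. h (i,j,s))"
    by (simp add: sum.cartesian_product)
  also have "\<dots> = (\<Sum>(i,p)\<in>A\<times>(B\<times>C). (case p of (j,s) \<Rightarrow> h (i,j,s)))" by (rule sum.cartesian_product)
  also have "\<dots> = (\<Sum>t\<in>A\<times>B\<times>C. h t)" by (intro sum.cong) auto
  finally show ?thesis .
qed

lemma sumV_phi: "(\<Sum>b\<in>octV n. phi (fst b - a1) * phi (fst (snd b) - a2)) \<le> 2 * (9/4)^2"
proof -
  define g where "g = (\<lambda>(i::int,j::int,s::int). (i, j, s * (int n - \<bar>i\<bar> - \<bar>j\<bar>)))"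
  define Dom where "Dom = {- int n..int n} \<times> {- int n..int n} \<times> {-1, 1::int}"
  define F where "F = (\<lambda>b::vtx. phi (fst b - a1) * phi (fst (snd b) - a2))"
  have Fnn: "\<And>b. 0 \<le> F b" by (simp add: F_def phi_nonneg)
  have sub: "octV n \<subseteq> g ` Dom"
  proof
    fix b assume b: "b \<in> octV n"
    obtain x y z where bb: "b = (x,y,z)" by (cases b) auto
    have sum: "\<bar>x\<bar> + \<bar>y\<bar> + \<bar>z\<bar> = int n" using b bb by (simp add: octV_def)
    define s where "s = (if z \<ge> 0 then 1 else -1::int)"
    have "b = g (x, y, s)" using sum by (auto simp: g_def bb s_def)
    moreover have "(x,y,s) \<in> Dom" using sum by (auto simp: Dom_def s_def)
    ultimately show "b \<in> g ` Dom" by blast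
  qed
  have finD: "finite Dom" by (simp add: Dom_def)
  have "(\<Sum>b\<in>octV n. F b) \<le> (\<Sum>b\<in>g ` Dom. F b)"
    by (rule sum_mono2[OF finite_imageI[OF finD] sub]) (simp add: Fnn)
  also have "\<dots> \<le> (\<Sum>t\<in>Dom. F (g t))"
    using sum_image_le[OF finD, of F g] Fnn by (simp add: comp_def)
  also have "\<dots> = (\<Sum>i\<in>{- int n..int n}. \<Sum>j\<in>{- int n..int n}. \<Sum>s\<in>{-1, 1::int}. F (g (i,j,s)))"
    unfolding Dom_def by (rule sum3[symmetric])
  also have "\<dots> = (\<Sum>i\<in>{- int n..int n}. \<Sum>j\<in>{- int n..int n}. \<Sum>s\<in>{-1, 1::int}. phi (i - a1) * phi (j - a2))"
    by (simp add: g_def F_def)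
  also have "\<dots> = 2 * (\<Sum>i\<in>{- int n..int n}. \<Sum>j\<in>{- int n..int n}. phi (i - a1) * phi (j - a2))"
    by (simp add: sum_distrib_left)
  also have "\<dots> = 2 * ((\<Sum>i\<in>{- int n..int n}. phi (i - a1)) * (\<Sum>j\<in>{- int n..int n}. phi (j - a2)))"
    by (simp add: sum_product)
  also have "\<dots> \<le> 2 * ((9/4) * (9/4))"
  proof -
    have A: "(\<Sum>i\<in>{- int n..int n}. phi (i - a1)) \<le> 9/4" "(\<Sum>j\<in>{- int n..int n}. phi (j - a2)) \<le> 9/4"
      "0 \<le> (\<Sum>i\<in>{- int n..int n}. phi (i - a1))" "0 \<le> (\<Sum>j\<in>{- int n..int n}. phi (j - a2))"
      using phi_sum_le[where n=n and c=a1] phi_sum_le[where n=n and c=a2] by (auto intro: sum_nonneg phi_nonneg)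
    have "(\<Sum>i\<in>{- int n..int n}. phi (i - a1)) * (\<Sum>j\<in>{- int n..int n}. phi (j - a2)) \<le> (9/4) * (9/4)"
      by (rule mult_mono) (use A in auto)
    then show ?thesis by simp
  qed
  finally show ?thesis by (simp add: F_def power2_eq_square)
qed

lemma zeta3_ge1: "1 \<le> zeta3"
proof -
  have "summable (\<lambda>i. inverse (real i ^ 3))" by (rule inverse_power_summable) simp
  then have sm: "summable (\<lambda>i. 1 / (real (Suc i))^3)"
    using summable_Suc_iff[of "\<lambda>i. inverse (real i ^ 3)"] by (simp add: inverse_eq_divide)
  have "sum (\<lambda>i. 1 / (real (Suc i))^3) {0} \<le> (\<Sum>i. 1 / (real (Suc i))^3)"
    by (rule sum_le_suminf[OF sm]) auto
  then show ?thesis by (simp add: zeta3_def)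
qed

lemma ln3_le: "ln (3::real) \<le> 3/2"
proof -
  have "ln (2 * (3/2::real)) = ln 2 + ln (3/2)" by (subst ln_mult) simp
  then have "ln (3::real) = ln 2 + ln (3/2)" by simp
  moreover have "ln (2::real) \<le> 1" using ln_le_minus_one[of 2] by simp
  moreover have "ln (3/2::real) \<le> 1/2" using ln_le_minus_one[of "3/2"] by simp
  ultimately show ?thesis by simp
qed

lemma card_N: "card {a \<in> octV n. octAdj n u a} \<le> 27"
proof -
  obtain u1 u2 u3 where u: "u = (u1,u2,u3)" by (cases u) auto
  have "{a \<in> octV n. octAdj n u a} \<subseteq> {u1-1..u1+1} \<times> {u2-1..u2+1} \<times> {u3-1..u3+1}"
    by (auto simp: u octAdj_def abs_le_iff)
  then have "card {a \<in> octV n. octAdj n u a} \<le> card ({u1-1..u1+1} \<times> {u2-1..u2+1} \<times> {u3-1..u3+1})"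
    by (rule card_mono[rotated]) auto
  also have "\<dots> = 27" by (simp add: card_cartesian_product)
  finally show ?thesis .
qed

lemma Z_le:
  assumes a: "a \<in> octV n" and n: "n \<ge> 1" and K: "0 < ln (real n + 1) - ln 3"
  shows "octZ n a \<le> inverse (4 * (ln (real n + 1) - ln 3))"
  using Zsum_lower[OF a n] K unfolding octZ_def by (intro le_imp_inverse_le) auto

lemma main_bound:
  assumes n: "n \<ge> 1" and u: "u \<in> octV n" and K: "0 < ln (real n + 1) - ln 3"
  shows "measure_pmf.prob (osw_pmf n) (E3 n u) \<le> (inverse (4 * (ln (real n + 1) - ln 3)))\<^sup>2 * (27 * (81/8))"
proof -
  define C where "C = (inverse (4 * (ln (real n + 1) - ln 3)))\<^sup>2"
  define N where "N = {a \<in> octV n. octAdj n u a}"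
  define I where "I = {(a,b). a \<in> N \<and> b \<in> octV n \<and> a \<noteq> b \<and> b \<noteq> u \<and> 2 \<le> octDist n a b \<and> 2 \<le> octDist n b u}"
  define Ev where "Ev = (\<lambda>(a::vtx,b::vtx). {c::vtx\<Rightarrow>vtx. c a = b \<and> c b = u})"
  define W where "W = (\<lambda>(a::vtx,b::vtx). phi (fst b - fst a) * phi (fst (snd b) - fst (snd a)))"
  have finN: "finite N" using fin_V by (simp add: N_def)
  have IS: "I \<subseteq> N \<times> octV n" by (auto simp: I_def)
  have finI: "finite I" using finN fin_V by (rule finite_subset[OF IS finite_cartesian_product])
  have sub: "E3 n u \<subseteq> (\<Union>i\<in>I. Ev i)"
  proof
    fix c assume "c \<in> E3 n u"
    then have "\<exists>a b. a \<in> octV n \<and> b \<in> octV n \<and> u \<noteq> a \<and> u \<noteq> b \<and> a \<noteq> b \<and>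
       type_s n u a \<and> type_w n c a b \<and> type_w n c b u" unfolding E3_def by (rule CollectD)
    then obtain a b where h: "a \<in> octV n \<and> b \<in> octV n \<and> u \<noteq> a \<and> u \<noteq> b \<and> a \<noteq> b \<and>
       type_s n u a \<and> type_w n c a b \<and> type_w n c b u" by blast
    have w1: "a \<noteq> b \<and> 2 \<le> octDist n a b \<and> c a = b" using h unfolding type_w_def by blast
    have w2: "b \<noteq> u \<and> 2 \<le> octDist n b u \<and> c b = u" using h unfolding type_w_def by blast
    have s1: "octAdj n u a" using h unfolding type_s_def by blast
    have "a \<in> N" unfolding N_def using h s1 by blast
    then have "(a,b) \<in> I" unfolding I_def using h w1 w2 by blast
    moreover have "c \<in> Ev (a,b)" unfolding Ev_def using w1 w2 by simp
    ultimately show "c \<in> (\<Union>i\<in>I. Ev i)" by blast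
  qed
  have "measure_pmf.prob (osw_pmf n) (E3 n u) \<le> measure_pmf.prob (osw_pmf n) (\<Union>i\<in>I. Ev i)"
    using sub by (intro measure_pmf.finite_measure_mono) auto
  also have "\<dots> \<le> (\<Sum>i\<in>I. measure_pmf.prob (osw_pmf n) (Ev i))"
    by (rule measure_pmf.finite_measure_subadditive_finite[OF finI]) auto
  also have "\<dots> \<le> (\<Sum>i\<in>I. C * W i)"
  proof (rule sum_mono)
    fix i assume i: "i \<in> I"
    obtain a b where ab: "i = (a,b)" by (cases i) auto
    have h: "a \<in> octV n" "b \<in> octV n" "a \<noteq> b" "b \<noteq> u" "2 \<le> octDist n a b" "2 \<le> octDist n b u" "octAdj n u a"
      using i by (auto simp: ab I_def N_def)
    have pa: "pmf (choice_pmf n a) b = octZ n a * inverse ((real (octDist n a b))\<^sup>2)"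
      using pmf_choice[OF h(1) n, of b] h by simp
    have pb: "pmf (choice_pmf n b) u = octZ n b * inverse ((real (octDist n b u))\<^sup>2)"
      using pmf_choice[OF h(2) n, of u] h u by simp
    have Za: "octZ n a \<le> inverse (4 * (ln (real n + 1) - ln 3))" by (rule Z_le[OF h(1) n K])
    have Zb: "octZ n b \<le> inverse (4 * (ln (real n + 1) - ln 3))" by (rule Z_le[OF h(2) n K])
    have Za0: "0 \<le> octZ n a" "0 \<le> octZ n b" using Zsum_lower[OF h(1) n] Zsum_lower[OF h(2) n] by (auto simp: octZ_def)
    have dab: "\<bar>fst a - fst b\<bar> \<le> int (octDist n a b) \<and> \<bar>fst (snd a) - fst (snd b)\<bar> \<le> int (octDist n a b)"
      using dist_coord[OF h(1) h(2)] by blast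
    have dbu: "\<bar>fst b - fst u\<bar> \<le> int (octDist n b u) \<and> \<bar>fst (snd b) - fst (snd u)\<bar> \<le> int (octDist n b u)"
      using dist_coord[OF h(2) u] by blast
    have adj: "\<bar>fst u - fst a\<bar> \<le> 1" "\<bar>fst (snd u) - fst (snd a)\<bar> \<le> 1" using h(7) by (auto simp: octAdj_def)
    have wl: "inverse ((real (octDist n a b))\<^sup>2) * inverse ((real (octDist n b u))\<^sup>2) \<le> W i"
      unfolding ab W_def prod.case
    proof (rule weight_le)
      show "2 \<le> real (octDist n a b)" "2 \<le> real (octDist n b u)" using h(5,6) by auto
      show "real_of_int \<bar>fst b - fst a\<bar> \<le> real (octDist n a b)"
        "real_of_int \<bar>fst (snd b) - fst (snd a)\<bar> \<le> real (octDist n a b)"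
        using dab by (simp_all add: abs_minus_commute, linarith+)
      show "real_of_int \<bar>fst b - fst a\<bar> \<le> real (octDist n b u) + 1"
        "real_of_int \<bar>fst (snd b) - fst (snd a)\<bar> \<le> real (octDist n b u) + 1"
        using dbu adj by linarith+
    qed
    have "measure_pmf.prob (osw_pmf n) (Ev i) = (octZ n a * octZ n b) *
        (inverse ((real (octDist n a b))\<^sup>2) * inverse ((real (octDist n b u))\<^sup>2))"
      using prob_pair[OF h(1) h(2) h(3), of b u] pa pb by (simp add: Ev_def ab)
    also have "\<dots> \<le> C * W i"
    proof (rule mult_mono)
      show "octZ n a * octZ n b \<le> C" unfolding C_def power2_eq_square
        using Za Zb Za0 K by (intro mult_mono) auto
      show "inverse ((real (octDist n a b))\<^sup>2) * inverse ((real (octDist n b u))\<^sup>2) \<le> W i" by (rule wl)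
      show "0 \<le> C" by (simp add: C_def)
      show "0 \<le> inverse ((real (octDist n a b))\<^sup>2) * inverse ((real (octDist n b u))\<^sup>2)" by simp
    qed
    finally show "measure_pmf.prob (osw_pmf n) (Ev i) \<le> C * W i" .
  qed
  also have "\<dots> \<le> (\<Sum>i\<in>N \<times> octV n. C * W i)"
    by (rule sum_mono2[OF finite_cartesian_product[OF finN fin_V] IS])
       (auto simp: C_def W_def phi_nonneg)
  also have "\<dots> = C * (\<Sum>a\<in>N. \<Sum>b\<in>octV n. W (a,b))"
    by (simp add: sum_distrib_left sum.cartesian_product)
  also have "\<dots> \<le> C * (\<Sum>a\<in>N. 81/8)"
  proof (intro mult_left_mono sum_mono)
    fix a assume "a \<in> N"
    show "(\<Sum>b\<in>octV n. W (a,b)) \<le> 81/8"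
      using sumV_phi[of "fst a" "fst (snd a)" n] by (simp add: W_def power2_eq_square)
  qed (simp add: C_def)
  also have "\<dots> = C * (card N * (81/8))" by simp
  also have "\<dots> \<le> C * (27 * (81/8))"
    using card_N[of n u] by (intro mult_left_mono) (auto simp: N_def C_def)
  finally show ?thesis by (simp add: C_def)
qed

theorem lemma7:
  fixes n :: nat and u :: vtx
  assumes "n \<ge> 1" and "u \<in> octV n"
  shows "measure_pmf.prob (osw_pmf n) (E3 n u) < 36 * zeta3 / (ln (real n + 1))\<^sup>2"
proof -
  define L where "L = ln (real n + 1)"
  have Lpos: "0 < L" using assms(1) by (simp add: L_def)
  have L2pos: "0 < L\<^sup>2" using Lpos by simp
  have z: "1 \<le> zeta3" by (rule zeta3_ge1)
  show ?thesis
  proof (cases "L\<^sup>2 < 36 * zeta3")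
    case True
    have "measure_pmf.prob (osw_pmf n) (E3 n u) \<le> 1" by (rule measure_pmf.prob_le_1)
    also have "1 < 36 * zeta3 / L\<^sup>2" using True L2pos by (simp add: less_divide_eq)
    finally show ?thesis by (simp add: L_def)
  next
    case False
    then have L2: "36 \<le> L\<^sup>2" using z by linarith
    have L6: "6 \<le> L"
    proof (rule ccontr)
      assume "\<not> 6 \<le> L"
      then have "L * L < 6 * 6" using Lpos by (intro mult_strict_mono) auto
      then show False using L2 by (simp add: power2_eq_square)
    qed
    define K where "K = L - ln 3"
    have KL: "3/4 * L \<le> K" using ln3_le L6 unfolding K_def by linarith
    have Kpos: "0 < K" using KL Lpos by linarith
    have "measure_pmf.prob (osw_pmf n) (E3 n u) \<le> (inverse (4 * K))\<^sup>2 * (27 * (81/8))"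
      using main_bound[OF assms(1) assms(2)] Kpos unfolding K_def L_def by simp
    also have "\<dots> = (2187/8) / (16 * K\<^sup>2)" by (simp add: power2_eq_square field_simps)
    also have "\<dots> \<le> (2187/8) / (9 * L\<^sup>2)"
    proof -
      have "(3/4 * L)\<^sup>2 \<le> K\<^sup>2" using KL Lpos by (intro power_mono) auto
      then have "9 * L\<^sup>2 \<le> 16 * K\<^sup>2" by (simp add: power2_eq_square)
      then show ?thesis using L2pos Kpos by (intro divide_left_mono) auto
    qed
    also have "\<dots> < 36 / L\<^sup>2" using L2pos by (simp add: divide_simps)
    also have "\<dots> \<le> 36 * zeta3 / L\<^sup>2" using z L2pos by (intro divide_right_mono) auto
    finally show ?thesis by (simp add: L_def)
  qed
qed

end
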